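(* Let $\lambda_1,\dots,\lambda_J>0$, $\lambda_{\max}=\max_j\lambda_j$, $\Gamma\ge0$ with $\min_j\lambda_j\Gamma\ge e^{2e}$, and let $(U^j_k)_{k\ge1}$ be nonnegative reals satisfying $\big|\sum_{i=1}^kU^j_i-\lambda_j^{-1}k\big|\le\Gamma\,\phi(k)$ for all $k\ge1$ and all $j$. Let $A_j(t)=\max\{k\ge0:\sum_{i=1}^kU^j_i\le t\}$. Then for every $t$ with $$t\ge\max_j\big(\lambda_j^{-1}e^e,\ \lambda_j^{-1}+3\lambda_j^{-1}\lambda_{\max}^2\Gamma^2\big),$$ we have $A_j(t)\le t\lambda_j+3\lambda_j^2\Gamma^2\phi(t\lambda_j)$ for every $j$.
   Context: $\phi(x)=\sqrt{x\ln\ln x}$ for $x\ge e^e$ and $\phi(x)=1$ for $x<e^e$. *)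

theory Defs
  imports Complex_Main
begin

definition phi :: "real \<Rightarrow> real" where
  "phi x = (if x \<ge> exp (exp 1) then sqrt (x * ln (ln x)) else 1)"

definition count_proc :: "(nat \<Rightarrow> real) \<Rightarrow> real \<Rightarrow> nat" where
  "count_proc U t = Max {k. (\<Sum>i=1..k. U i) \<le> t}"

end

theory Submission
  imports Defs
begin

lemma ee_facts: fixes x :: real assumes "x \<ge> exp (exp 1)" shows "x > 1" "ln x \<ge> exp 1" "ln (ln x) \<ge> 1" "ln x \<ge> 2"
proof -
  have e2: "exp 1 \<ge> (2::real)" using exp_ge_add_one_self[of 1] by simp
  have "exp (exp 1) \<ge> 1 + exp (1::real)" by simp
  then show x1: "x > 1" using assms e2 by linarith
  have "ln (exp (exp 1)) \<le> ln x" using assms x1 by (subst ln_le_cancel_iff) auto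
  then show l: "ln x \<ge> exp 1" by simp
  then show "ln x \<ge> 2" using e2 by linarith
  have lp: "ln x > 0" using l exp_gt_zero[of 1] by linarith
  have "ln (exp 1) \<le> ln (ln x)" using l lp by (subst ln_le_cancel_iff) auto
  then show "ln (ln x) \<ge> 1" by simp
qed

lemma ln_le_2sqrt: assumes "(y::real) > 0" shows "ln y \<le> 2 * sqrt y - 2"
proof -
  have "ln (sqrt y) \<le> sqrt y - 1" using assms by (intro ln_le_minus_one) auto
  moreover have "ln (sqrt y) = ln y / 2" using assms by (simp add: ln_sqrt)
  ultimately show ?thesis by simp
qed

lemma phi_ge1: "phi y \<ge> 1"
proof (cases "y \<ge> exp (exp 1)")
  case True
  note f = ee_facts[OF True]
  have "y * ln (ln y) \<ge> 1 * 1" using f by (intro mult_mono) auto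
  then show ?thesis using True by (simp add: phi_def)
qed (simp add: phi_def)

lemma phi_sqrt: assumes "y \<ge> exp (exp 1)" shows "phi y \<ge> sqrt y"
proof -
  note f = ee_facts[OF assms]
  have "y * ln (ln y) \<ge> y * 1" using f by (intro mult_left_mono) auto
  then show ?thesis using assms by (simp add: phi_def)
qed

lemma ln8: "ln (8::real) = 3 * ln 2"
proof -
  have "ln ((2::real)^3) = 3 * ln 2" by (subst ln_realpow) auto
  then show ?thesis by simp
qed

lemma big_case: fixes k c :: real assumes c9: "c \<ge> 9" and ke: "k \<ge> exp (exp 1)"
  and h: "k < 4*c^2 * ln (ln k)" shows "k \<le> 5*c^3"
proof -
  note f = ee_facts[OF ke]
  have k0: "k > 0" using f by simp
  have "ln (ln k) \<le> ln k - 1" using f by (intro ln_le_minus_one) auto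
  also have "ln k \<le> 2 * sqrt k - 2" using ln_le_2sqrt k0 by blast
  finally have "k < 4*c^2 * (2 * sqrt k)" using h c9
    by (smt (verit) mult_left_mono zero_le_power2)
  moreover have "k = sqrt k * sqrt k" using k0 by simp
  ultimately have "sqrt k * sqrt k < (8*c^2) * sqrt k" by (simp add: algebra_simps)
  then have sk: "sqrt k < 8*c^2" by (rule mult_right_less_imp_less) (use k0 in simp)
  have "ln k = 2 * ln (sqrt k)" using k0 by (simp add: ln_sqrt)
  also have "ln (sqrt k) < ln (8*c^2)" using sk k0 by (subst ln_less_cancel_iff) auto
  also have "ln (8*c^2) = 3 * ln 2 + 2 * ln c" using c9
    by (simp add: ln_mult ln8 ln_realpow)
  finally have "ln k < 2 * (3 * ln 2 + 2 * ln c)" by simp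
  moreover have "ln c \<le> 2 * sqrt c - 2" using c9 ln_le_2sqrt by simp
  ultimately have lk: "ln k < 8 * sqrt c" using ln_2_less_1 by argo
  have sc: "sqrt c \<ge> 3" using c9 real_sqrt_le_mono[of 9 c] by simp
  have "ln (ln k) < ln (8 * sqrt c)" using lk f c9 by (subst ln_less_cancel_iff) auto
  also have "ln (8 * sqrt c) = 3 * ln 2 + ln c / 2" using c9
    by (simp add: ln_mult ln_sqrt ln8)
  finally have L: "ln (ln k) < 2 + sqrt c" using ln_2_less_1 \<open>ln c \<le> 2 * sqrt c - 2\<close> by argo
  have "4*c^2 * ln (ln k) \<le> 4*c^2 * (2 + sqrt c)"
    using L by (intro mult_left_mono) auto
  then have "k < 4*c^2 * (2 + sqrt c)" using h by linarith
  also have "4*c^2 * (2 + sqrt c) \<le> 5 * c^3"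
  proof -
    have cs: "c = sqrt c * sqrt c" using c9 by simp
    have "3 * sqrt c \<le> sqrt c * sqrt c" using sc c9 by (intro mult_right_mono) auto
    then have "3 * sqrt c \<le> c" using cs by metis
    then have "4 * (2 + sqrt c) \<le> 5 * c" using sc by argo
    then have "c^2 * (4 * (2 + sqrt c)) \<le> c^2 * (5*c)" by (intro mult_left_mono) auto
    then show ?thesis by (simp add: algebra_simps power3_eq_cube power2_eq_square)
  qed
  finally show ?thesis by simp
qed

lemma phi_double: fixes k x :: real assumes xe: "x \<ge> exp (exp 1)" and ke: "k \<ge> exp (exp 1)"
  and k2: "k \<le> 2 * x" shows "phi k \<le> 2 * phi x"
proof -
  note fx = ee_facts[OF xe] and fk = ee_facts[OF ke]
  have "ln (2*x) = ln 2 + ln x" using fx by (simp add: ln_mult)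
  also have "\<dots> \<le> ln x * ln x"
  proof -
    have "2 * ln x \<le> ln x * ln x" using fx by (intro mult_right_mono) auto
    then show ?thesis using ln_2_less_1 fx by linarith
  qed
  finally have l2: "ln (2*x) \<le> ln x * ln x" .
  have "ln k \<le> ln (2*x)" using k2 fk by (subst ln_le_cancel_iff) auto
  also note l2
  finally have "ln (ln k) \<le> ln (ln x * ln x)" using fk by (subst ln_le_cancel_iff) auto
  also have "\<dots> = 2 * ln (ln x)" using fx by (simp add: ln_mult)
  finally have ll: "ln (ln k) \<le> 2 * ln (ln x)" .
  have "k * ln (ln k) \<le> (2*x) * (2 * ln (ln x))"
    using k2 ll fk by (intro mult_mono) auto
  then have "sqrt (k * ln (ln k)) \<le> sqrt (4 * (x * ln (ln x)))"
    by (intro real_sqrt_le_mono) (simp add: algebra_simps)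
  also have "\<dots> = 2 * sqrt (x * ln (ln x))" by (simp add: real_sqrt_mult)
  finally show ?thesis using xe ke by (simp add: phi_def)
qed

lemma core: fixes k x c :: real assumes c9: "c \<ge> 9" and xe: "x \<ge> exp (exp 1)"
  and x3: "x \<ge> 1 + 3*c^2" and k0: "k \<ge> 0" and kb: "k \<le> x + c * phi k"
  shows "k \<le> x + 3*c^2 * phi x"
proof -
  have p1: "phi x \<ge> 1" by (rule phi_ge1)
  have cc: "c * 1 \<le> c * c" using c9 by (intro mult_left_mono) auto
  have "(3*c^2) * 1 \<le> (3*c^2) * phi x" using p1 by (intro mult_left_mono) auto
  then have c3: "3*c \<le> 3*c^2 * phi x" using cc by (simp add: power2_eq_square)
  show ?thesis
  proof (cases "k \<ge> exp (exp 1)")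
    case False
    then have "phi k = 1" by (simp add: phi_def)
    then have "k \<le> x + c" using kb by simp
    then show ?thesis using c3 c9 by linarith
  next
    case ke: True
    show ?thesis
    proof (cases "k \<le> 2 * x")
      case True
      have "phi k \<le> 2 * phi x" using phi_double[OF xe ke True] .
      then have "c * phi k \<le> c * (2 * phi x)" using c9 by (intro mult_left_mono) auto
      moreover have "(2*c) * phi x \<le> (3 * c^2) * phi x" using p1 c9 cc
        by (intro mult_right_mono) (auto simp: power2_eq_square)
      moreover have "c * (2 * phi x) = (2*c) * phi x" by simp
      ultimately show ?thesis using kb by linarith
    next
      case False
      note fk = ee_facts[OF ke]
      have pk: "phi k = sqrt (k * ln (ln k))" using ke by (simp add: phi_def)
      have lt: "k / (2*c) < sqrt (k * ln (ln k))"
      proof -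
        have "k < 2 * (c * phi k)" using kb False by linarith
        then show ?thesis using c9 pk by (simp add: field_simps)
      qed
      have "(k / (2*c))^2 < (sqrt (k * ln (ln k)))^2"
        using lt fk c9 by (intro power_strict_mono) auto
      also have "\<dots> = k * ln (ln k)" using fk by simp
      finally have "k^2 / (4*c^2) < k * ln (ln k)" by (simp add: power_divide power_mult_distrib)
      then have "k^2 < (k * ln (ln k)) * (4 * c^2)" using c9 by (simp add: field_simps)
      then have "k * k < k * (4*c^2 * ln (ln k))" by (simp add: power2_eq_square algebra_simps)
      then have "k < 4*c^2 * ln (ln k)" using fk by (simp add: mult_less_cancel_left)
      from big_case[OF c9 ke this] have kc: "k \<le> 5*c^3" .
      have "(5*c/3)^2 = 25/9 * c^2" by (simp add: power2_eq_square)
      moreover have "0 \<le> c^2" by simp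
      ultimately have "(5*c/3)^2 \<le> x" using x3 by linarith
      then have "5*c/3 \<le> sqrt x" by (rule real_le_rsqrt)
      also have "sqrt x \<le> phi x" by (rule phi_sqrt[OF xe])
      finally have "c^2 * (5*c/3) \<le> c^2 * phi x" by (intro mult_left_mono) auto
      then have "5*c^3 \<le> 3*c^2*phi x" by (simp add: power3_eq_cube power2_eq_square field_simps)
      then show ?thesis using kc ee_facts(1)[OF xe] by linarith
    qed
  qed
qed

theorem mainTheorem7:
  fixes J :: nat and lam :: "nat \<Rightarrow> real" and \<Gamma> :: real
    and U :: "nat \<Rightarrow> nat \<Rightarrow> real" and t :: real
  assumes J_pos: "J \<ge> 1"
    and lam_pos: "\<forall>j\<in>{1..J}. lam j > 0"
    and Gamma_nonneg: "\<Gamma> \<ge> 0"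
    and min_cond: "Min (lam ` {1..J}) * \<Gamma> \<ge> exp (2 * exp 1)"
    and U_nonneg: "\<forall>j\<in>{1..J}. \<forall>k\<ge>1. U j k \<ge> 0"
    and U_bound: "\<forall>j\<in>{1..J}. \<forall>k\<ge>1.
        \<bar>(\<Sum>i=1..k. U j i) - real k / lam j\<bar> \<le> \<Gamma> * phi (real k)"
    and t_large: "\<forall>j\<in>{1..J}. t \<ge> exp (exp 1) / lam j
        \<and> t \<ge> 1 / lam j + 3 * (1 / lam j) * (Max (lam ` {1..J}))\<^sup>2 * \<Gamma>\<^sup>2"
  shows "\<forall>j\<in>{1..J}. real (count_proc (U j) t)
           \<le> t * lam j + 3 * (lam j)\<^sup>2 * \<Gamma>\<^sup>2 * phi (t * lam j)"
proof
  fix j assume jJ: "j \<in> {1..J}"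
  define l where "l = lam j"
  define c where "c = l * \<Gamma>"
  define x where "x = t * l"
  define M where "M = Max (lam ` {1..J})"
  have l0: "l > 0" using lam_pos jJ l_def by auto
  have fin: "finite (lam ` {1..J})" by simp
  have mn: "Min (lam ` {1..J}) \<le> l" unfolding l_def using jJ fin by (intro Min_le) auto
  have mx: "l \<le> M" unfolding l_def M_def using jJ fin by (intro Max_ge) auto
  have e9: "exp (2 * exp 1) \<ge> (9::real)"
  proof -
    have "exp (2 * exp 1) = exp (exp 1) * exp (exp (1::real))" by (simp flip: exp_add)
    moreover have "exp (exp (1::real)) \<ge> 3" using exp_ge_add_one_self[of "exp 1"] exp_ge_add_one_self[of 1] by linarith
    moreover have "exp (exp 1) * exp (exp (1::real)) \<ge> 3 * 3"
      using \<open>exp (exp (1::real)) \<ge> 3\<close> by (intro mult_mono) auto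
    ultimately show ?thesis by simp
  qed
  have "Min (lam ` {1..J}) * \<Gamma> \<le> l * \<Gamma>" using mn Gamma_nonneg by (rule mult_right_mono)
  then have c9: "c \<ge> 9" using min_cond e9 c_def by linarith
  have tl: "t \<ge> exp (exp 1) / l \<and> t \<ge> 1 / l + 3 * (1 / l) * M\<^sup>2 * \<Gamma>\<^sup>2"
    using t_large jJ l_def M_def by auto
  have xe: "x \<ge> exp (exp 1)" using tl l0 x_def by (simp add: field_simps)
  have "x \<ge> 1 + 3 * M^2 * \<Gamma>^2" using tl l0 x_def by (simp add: field_simps)
  moreover have "l^2 \<le> M^2" using mx l0 by (intro power_mono) auto
  then have "l^2 * \<Gamma>^2 \<le> M^2 * \<Gamma>^2" by (intro mult_right_mono) auto
  ultimately have x3: "x \<ge> 1 + 3 * c^2" using c_def by (simp add: power_mult_distrib)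
  have x0: "x > 0" using xe exp_gt_zero[of "exp 1"] by linarith
  then have "t * l > 0" using x_def by simp
  then have t0: "t \<ge> 0" using l0 by (simp add: zero_less_mult_iff)
  define B where "B = x + 3*c^2 * phi x"
  define S where "S = {k. (\<Sum>i=1..k. U j i) \<le> t}"
  have bnd: "real k \<le> B" if "k \<in> S" for k
  proof (cases "k = 0")
    case True
    have "0 \<le> 3*c^2 * phi x" using phi_ge1[of x] by simp
    then show ?thesis using True x0 B_def by simp
  next
    case False
    then have "k \<ge> 1" by simp
    then have "\<bar>(\<Sum>i=1..k. U j i) - real k / l\<bar> \<le> \<Gamma> * phi (real k)"
      using U_bound jJ l_def by auto
    moreover have "(\<Sum>i=1..k. U j i) \<le> t" using that S_def by simp
    ultimately have "real k / l \<le> t + \<Gamma> * phi (real k)" by linarith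
    then have "real k \<le> (t + \<Gamma> * phi (real k)) * l" using l0 by (simp add: field_simps)
    then have "real k \<le> x + c * phi (real k)" using x_def c_def by (simp add: algebra_simps)
    from core[OF c9 xe x3 _ this] show ?thesis using B_def by simp
  qed
  have "S \<subseteq> {..nat \<lceil>B\<rceil>}"
  proof
    fix k assume "k \<in> S"
    then have "real k \<le> B" by (rule bnd)
    then have "real k \<le> real_of_int \<lceil>B\<rceil>" using le_of_int_ceiling[of B] by linarith
    then have "int k \<le> \<lceil>B\<rceil>" by linarith
    then show "k \<in> {..nat \<lceil>B\<rceil>}" by (simp add: le_nat_iff)
  qed
  then have finS: "finite S" by (rule finite_subset) simp
  have "0 \<in> S" using S_def t0 by simp
  then have "Max S \<in> S" using finS by (intro Max_in) auto
  then have "real (Max S) \<le> B" by (rule bnd)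
  moreover have "count_proc (U j) t = Max S" unfolding count_proc_def S_def by simp
  moreover have "B = t * lam j + 3 * (lam j)\<^sup>2 * \<Gamma>\<^sup>2 * phi (t * lam j)"
    using B_def x_def c_def l_def by (simp add: power_mult_distrib)
  ultimately show "real (count_proc (U j) t) \<le> t * lam j + 3 * (lam j)\<^sup>2 * \<Gamma>\<^sup>2 * phi (t * lam j)" by simp
qed

end
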